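(* Given a neural network $f$ and an input $\mathbf{x} = \langle x_1, \ldots, x_m \rangle$ where $m \geq 2$, the time complexity of $\textsc{qXp}(\emptyset, \emptyset, \mathbf{x})$ is $\lfloor \log_2 m \rfloor + 1$ calls of $\textsc{checkValid}$ for the best case (all features are irrelevant) and $(m-1) \times 2$ calls of $\textsc{checkValid}$ for the worst case (all features are in explanation). When $m = 1$, it needs $1$ $\textsc{checkValid}$ call.
   Context: $f$ is a neural network (classifier or regressor), $\mathbf{x}$ an input with $m$ features, $\epsilon$ a perturbation magnitude and $p$ a norm. The oracle $\textsc{checkValid}(f, \mathbf{x}, \mathbf{x}_S)$ returns True iff every input obtained from $\mathbf{x}$ by perturbing the features in $\mathbf{x}_S$ within $\epsilon$ (in $p$-norm) while keeping all other features fixed yields the same prediction as $\mathbf{x}$ (same class, or output within $\delta$ for regression); such features are irrelevant, the others form the explanation. The recursive function $\textsc{qXp}(\mathbf{x}_\alpha, \mathbf{x}_\beta, \mathbf{x}_\Theta)$ (current explanation, current irrelevant set, features still to analyze) returns a pair (explanation features, irrelevant set) and does: if $|\mathbf{x}_\Theta|=1$, return $(\emptyset, \mathbf{x}_\beta\cup\mathbf{x}_\Theta)$ if $\textsc{checkValid}(f,\mathbf{x},\mathbf{x}_\beta\cup\mathbf{x}_\Theta)$ is True, else $(\mathbf{x}_\Theta,\mathbf{x}_\beta)$. Otherwise split $\mathbf{x}_\Theta$ into halves $\mathbf{x}_\Phi,\mathbf{x}_\Psi$ (with $|\mathbf{x}_\Phi|=|\mathbf{x}_\Psi|+1$ when odd).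 If $\textsc{checkValid}(f,\mathbf{x},\mathbf{x}_\beta\cup\mathbf{x}_\Phi)$ is True, return $\textsc{qXp}(\mathbf{x}_\alpha,\mathbf{x}_\beta\cup\mathbf{x}_\Phi,\mathbf{x}_\Psi)$; else if $\textsc{checkValid}(f,\mathbf{x},\mathbf{x}_\beta\cup\mathbf{x}_\Psi)$ is True, return $\textsc{qXp}(\mathbf{x}_\alpha,\mathbf{x}_\beta\cup\mathbf{x}_\Psi,\mathbf{x}_\Phi)$; else: if $|\mathbf{x}_\Phi|=1$ set $(\mathbf{x}_\Phi',\mathbf{x}_\beta')=(\mathbf{x}_\Phi,\mathbf{x}_\beta)$, otherwise $(\mathbf{x}_\Phi',\mathbf{x}_\beta')=\textsc{qXp}(\mathbf{x}_\alpha\cup\mathbf{x}_\Psi,\mathbf{x}_\beta,\mathbf{x}_\Phi)$; if $|\mathbf{x}_\Psi|=1$ set $(\mathbf{x}_\Psi',\mathbf{x}_\beta'')=(\mathbf{x}_\Psi,\mathbf{x}_\beta')$, otherwise $(\mathbf{x}_\Psi',\mathbf{x}_\beta'')=\textsc{qXp}(\mathbf{x}_\alpha\cup\mathbf{x}_\Phi',\mathbf{x}_\beta',\mathbf{x}_\Psi)$; return $(\mathbf{x}_\Phi'\cup\mathbf{x}_\Psi',\mathbf{x}_\beta'')$. *)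

theory Defs
  imports Complex_Main "HOL-Library.Extended_Real"
begin

definition pnorm :: "ereal \<Rightarrow> nat set \<Rightarrow> (nat \<Rightarrow> real) \<Rightarrow> real" where
  "pnorm p S d = (if p = \<infinity> then (if S = {} then 0 else Max ((\<lambda>i. \<bar>d i\<bar>) ` S))
                  else (\<Sum>i\<in>S. \<bar>d i\<bar> powr real_of_ereal p) powr (1 / real_of_ereal p))"

text \<open>The oracle checkValid. f maps inputs (feature vectors nat => real, features indexed
  0..<m) to outputs; same o o' says that o' counts as the same prediction as o
  (equality of class for classifiers, |o - o'| \<le> \<delta> for regressors).\<close>
definition checkValid ::
  "((nat \<Rightarrow> real) \<Rightarrow> 'b) \<Rightarrow> ('b \<Rightarrow> 'b \<Rightarrow> bool) \<Rightarrow> ereal \<Rightarrow> real \<Rightarrow> (nat \<Rightarrow> real) \<Rightarrow> nat set \<Rightarrow> bool" where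
  "checkValid f same p eps x S =
     (\<forall>x'. (\<forall>i. i \<notin> S \<longrightarrow> x' i = x i) \<longrightarrow> pnorm p S (\<lambda>i. x' i - x i) \<le> eps
          \<longrightarrow> same (f x) (f x'))"

text \<open>qXp, instrumented: qXp cv alpha beta theta returns (explanation features, irrelevant set,
  number of calls to the oracle cv). Sets are represented by lists (order fixes the split).\<close>
function qXp :: "(nat set \<Rightarrow> bool) \<Rightarrow> nat list \<Rightarrow> nat list \<Rightarrow> nat list \<Rightarrow> nat list \<times> nat list \<times> nat" where
  "qXp cv \<alpha> \<beta> \<Theta> =
    (if length \<Theta> \<le> 1 then
       (if \<Theta> = [] then ([], \<beta>, 0)
        else if cv (set \<beta> \<union> set \<Theta>) then ([], \<beta> @ \<Theta>, 1) else (\<Theta>, \<beta>, 1))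
     else
       (let \<Phi> = take ((length \<Theta> + 1) div 2) \<Theta>; \<Psi> = drop ((length \<Theta> + 1) div 2) \<Theta> in
        if cv (set \<beta> \<union> set \<Phi>) then
          (case qXp cv \<alpha> (\<beta> @ \<Phi>) \<Psi> of (e, b, c) \<Rightarrow> (e, b, c + 1))
        else if cv (set \<beta> \<union> set \<Psi>) then
          (case qXp cv \<alpha> (\<beta> @ \<Psi>) \<Phi> of (e, b, c) \<Rightarrow> (e, b, c + 2))
        else
          (case (if length \<Phi> = 1 then (\<Phi>, \<beta>, 0) else qXp cv (\<alpha> @ \<Psi>) \<beta> \<Phi>) of
             (\<Phi>', \<beta>', c1) \<Rightarrow>
               (case (if length \<Psi> = 1 then (\<Psi>, \<beta>', 0) else qXp cv (\<alpha> @ \<Phi>') \<beta>' \<Psi>) of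
                  (\<Psi>', \<beta>'', c2) \<Rightarrow> (\<Phi>' @ \<Psi>', \<beta>'', c1 + c2 + 2)))))"
  by pat_completeness auto
termination
  by (relation "measure (\<lambda>(cv, \<alpha>, \<beta>, \<Theta>). length \<Theta>)") auto

definition qXp_calls :: "(nat set \<Rightarrow> bool) \<Rightarrow> nat list \<Rightarrow> nat" where
  "qXp_calls cv xs = snd (snd (qXp cv [] [] xs))"

end

theory Submission
  imports Defs "HOL-Library.Log_Nat"
begin

declare qXp.simps[simp del]

lemma cv_mono:
  assumes "checkValid f same p eps x T" "S \<subseteq> T" "finite T"
  shows "checkValid f same p eps x S"
  unfolding checkValid_def
proof (intro allI impI)
  fix x' assume hfix: "\<forall>i. i \<notin> S \<longrightarrow> x' i = x i" and le: "pnorm p S (\<lambda>i. x' i - x i) \<le> eps"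
  have fixT: "\<forall>i. i \<notin> T \<longrightarrow> x' i = x i" using hfix assms(2) by blast
  have fS: "finite S" using assms(2,3) finite_subset by blast
  have "pnorm p T (\<lambda>i. x' i - x i) \<le> pnorm p S (\<lambda>i. x' i - x i)"
  proof (cases "p = \<infinity>")
    case True
    show ?thesis
    proof (cases "S = {}")
      case True
      then have "\<forall>i\<in>T. \<bar>x' i - x i\<bar> = 0" using hfix by auto
      then show ?thesis using \<open>p = \<infinity>\<close> True assms(3)
        by (auto simp: pnorm_def Max_le_iff)
    next
      case False
      have "\<forall>i\<in>T. \<bar>x' i - x i\<bar> \<le> Max ((\<lambda>i. \<bar>x' i - x i\<bar>) ` S)"
      proof
        fix i assume "i \<in> T"
        show "\<bar>x' i - x i\<bar> \<le> Max ((\<lambda>i. \<bar>x' i - x i\<bar>) ` S)"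
        proof (cases "i \<in> S")
          case True then show ?thesis using fS by (auto intro: Max_ge)
        next
          case False
          obtain j where "j \<in> S" using \<open>S \<noteq> {}\<close> by blast
          then have "\<bar>x' j - x j\<bar> \<le> Max ((\<lambda>i. \<bar>x' i - x i\<bar>) ` S)" using fS by (auto intro: Max_ge)
          then show ?thesis using False hfix by auto
        qed
      qed
      then show ?thesis using \<open>p = \<infinity>\<close> False assms(2,3)
        by (auto simp: pnorm_def Max_le_iff)
    qed
  next
    case False
    have "(\<Sum>i\<in>T. \<bar>x' i - x i\<bar> powr real_of_ereal p) = (\<Sum>i\<in>S. \<bar>x' i - x i\<bar> powr real_of_ereal p)"
      by (rule sum.mono_neutral_right[OF assms(3) assms(2)]) (use hfix in auto)
    then show ?thesis using False by (simp add: pnorm_def)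
  qed
  then have "pnorm p T (\<lambda>i. x' i - x i) \<le> eps" using le by linarith
  then show "same (f x) (f x')" using assms(1) fixT unfolding checkValid_def by blast
qed

lemma best:
  shows "\<forall>S. S \<subseteq> A \<longrightarrow> cv S \<Longrightarrow> \<Theta> \<noteq> [] \<Longrightarrow> set \<beta> \<union> set \<Theta> \<subseteq> A \<Longrightarrow>
    int (snd (snd (qXp cv \<alpha> \<beta> \<Theta>))) = \<lfloor>log 2 (real (length \<Theta>))\<rfloor> + 1"
proof (induction cv \<alpha> \<beta> \<Theta> rule: qXp.induct)
  case (1 cv \<alpha> \<beta> \<Theta>)
  show ?case
  proof (cases "length \<Theta> \<le> 1")
    case True
    then have "length \<Theta> = 1" using "1.prems"(2) by (cases \<Theta>) auto
    then obtain a where a: "\<Theta> = [a]" by (cases \<Theta>) auto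
    have "cv (set \<beta> \<union> set \<Theta>)" using "1.prems"(3) "1.prems"(1) by blast
    then show ?thesis using a by (subst qXp.simps) simp
  next
    case False
    define \<Phi> where "\<Phi> = take ((length \<Theta> + 1) div 2) \<Theta>"
    define \<Psi> where "\<Psi> = drop ((length \<Theta> + 1) div 2) \<Theta>"
    have "set \<beta> \<union> set \<Phi> \<subseteq> A" using "1.prems"(3) set_take_subset[of _ \<Theta>]
      unfolding \<Phi>_def by blast
    then have c: "cv (set \<beta> \<union> set \<Phi>)" using "1.prems"(1) by blast
    have lP: "length \<Psi> = length \<Theta> div 2" unfolding \<Psi>_def by simp
    have ne: "\<Psi> \<noteq> []" using False lP by auto
    have sub: "set (\<beta> @ \<Phi>) \<union> set \<Psi> \<subseteq> A" using "1.prems"(3) set_take_subset[of _ \<Theta>] set_drop_subset[of _ \<Theta>]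
      unfolding \<Phi>_def \<Psi>_def by (auto dest: in_set_takeD in_set_dropD)
    have IH: "int (snd (snd (qXp cv \<alpha> (\<beta> @ \<Phi>) \<Psi>))) = \<lfloor>log 2 (real (length \<Psi>))\<rfloor> + 1"
      using "1.IH"(1)[OF False \<Phi>_def \<Psi>_def c "1.prems"(1) ne sub] .
    have q: "qXp cv \<alpha> \<beta> \<Theta> = (case qXp cv \<alpha> (\<beta> @ \<Phi>) \<Psi> of (e, b, c) \<Rightarrow> (e, b, c + 1))"
      using False c unfolding \<Phi>_def \<Psi>_def by (subst qXp.simps) (simp only: Let_def if_False if_True)
    have eq: "snd (snd (qXp cv \<alpha> \<beta> \<Theta>)) = snd (snd (qXp cv \<alpha> (\<beta> @ \<Phi>) \<Psi>)) + 1"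
      unfolding q by (simp split: prod.split)
    have fl: "\<lfloor>log 2 (real (length \<Theta>))\<rfloor> = \<lfloor>log 2 (real (length \<Theta> div 2))\<rfloor> + 1"
      using floor_log_div[of 2 "length \<Theta>"] False "1.prems"(2) by simp
    show ?thesis using eq IH fl lP by simp
  qed
qed

lemma worst:
  shows "\<forall>S i. finite S \<longrightarrow> i \<in> S \<longrightarrow> i \<in> A \<longrightarrow> \<not> cv S \<Longrightarrow> length \<Theta> \<ge> 2 \<Longrightarrow> set \<Theta> \<subseteq> A \<Longrightarrow>
    snd (snd (qXp cv \<alpha> \<beta> \<Theta>)) = (length \<Theta> - 1) * 2"
proof (induction cv \<alpha> \<beta> \<Theta> rule: qXp.induct)
  case (1 cv \<alpha> \<beta> \<Theta>)
  have False_len: "\<not> length \<Theta> \<le> 1" using "1.prems"(2) by simp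
  define \<Phi> where "\<Phi> = take ((length \<Theta> + 1) div 2) \<Theta>"
  define \<Psi> where "\<Psi> = drop ((length \<Theta> + 1) div 2) \<Theta>"
  have lP: "length \<Psi> = length \<Theta> div 2" unfolding \<Psi>_def by simp
  have lF: "length \<Phi> = (length \<Theta> + 1) div 2" unfolding \<Phi>_def using "1.prems"(2) by simp
  have sF: "set \<Phi> \<subseteq> A" using "1.prems"(3) set_take_subset[of _ \<Theta>] unfolding \<Phi>_def by blast
  have sP: "set \<Psi> \<subseteq> A" using "1.prems"(3) set_drop_subset[of _ \<Theta>] unfolding \<Psi>_def by blast
  have neF: "\<Phi> \<noteq> []" and neP: "\<Psi> \<noteq> []" using lF lP "1.prems"(2) by auto
  have c1: "\<not> cv (set \<beta> \<union> set \<Phi>)"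
  proof -
    obtain i where "i \<in> set \<Phi>" using neF by (cases \<Phi>) auto
    then show ?thesis using "1.prems"(1) sF by blast
  qed
  have c2: "\<not> cv (set \<beta> \<union> set \<Psi>)"
  proof -
    obtain i where "i \<in> set \<Psi>" using neP by (cases \<Psi>) auto
    then show ?thesis using "1.prems"(1) sP by blast
  qed
  define r1 where "r1 = (if length \<Phi> = 1 then (\<Phi>, \<beta>, 0) else qXp cv (\<alpha> @ \<Psi>) \<beta> \<Phi>)"
  obtain F' b' k1 where r1: "r1 = (F', b', k1)" by (cases r1) auto
  have k1: "k1 = (length \<Phi> - 1) * 2"
  proof (cases "length \<Phi> = 1")
    case True then show ?thesis using r1 unfolding r1_def by simp
  next
    case False
    then have "length \<Phi> \<ge> 2" using neF length_greater_0_conv[of \<Phi>] by linarith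
    from "1.IH"(3)[OF False_len \<Phi>_def \<Psi>_def c1 c2 False "1.prems"(1) this sF] show ?thesis
      using r1 False unfolding r1_def by simp
  qed
  define r2 where "r2 = (if length \<Psi> = 1 then (\<Psi>, b', 0) else qXp cv (\<alpha> @ F') b' \<Psi>)"
  obtain P' b'' k2 where r2: "r2 = (P', b'', k2)" by (cases r2) auto
  have k2: "k2 = (length \<Psi> - 1) * 2"
  proof (cases "length \<Psi> = 1")
    case True then show ?thesis using r2 unfolding r2_def by simp
  next
    case False
    then have "length \<Psi> \<ge> 2" using neP length_greater_0_conv[of \<Psi>] by linarith
    from "1.IH"(4)[OF False_len \<Phi>_def \<Psi>_def c1 c2 r1[unfolded r1_def, symmetric] refl False "1.prems"(1) this sP] show ?thesis
      using r2 False unfolding r2_def by simp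
  qed
  have q: "qXp cv \<alpha> \<beta> \<Theta> = (case r1 of (\<Phi>', \<beta>', c1) \<Rightarrow>
      (case (if length \<Psi> = 1 then (\<Psi>, \<beta>', 0) else qXp cv (\<alpha> @ \<Phi>') \<beta>' \<Psi>) of
         (\<Psi>', \<beta>'', c2) \<Rightarrow> (\<Phi>' @ \<Psi>', \<beta>'', c1 + c2 + 2)))"
    using False_len c1 c2 unfolding r1_def \<Phi>_def \<Psi>_def
    by (subst qXp.simps) (simp only: Let_def if_False if_True)
  have q2: "qXp cv \<alpha> \<beta> \<Theta> = (F' @ P', b'', k1 + k2 + 2)"
    unfolding q r1 prod.case r2_def[symmetric] r2 by (rule refl)
  have eq: "snd (snd (qXp cv \<alpha> \<beta> \<Theta>)) = k1 + k2 + 2"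
    unfolding q2 by simp
  have s1: "length \<Phi> + length \<Psi> = length \<Theta>" using lF lP by simp
  have s2: "length \<Phi> \<ge> 1" "length \<Psi> \<ge> 1" using neF neP by (simp_all add: Suc_le_eq)
  show ?case using eq k1 k2 s1 s2 by arith
qed

theorem theorem2:
  fixes f :: "(nat \<Rightarrow> real) \<Rightarrow> 'b" and same :: "'b \<Rightarrow> 'b \<Rightarrow> bool"
    and p :: ereal and eps :: real and x :: "nat \<Rightarrow> real" and m :: nat
  defines "cv \<equiv> checkValid f same p eps x"
  shows "(m \<ge> 2 \<longrightarrow> cv {0..<m} \<longrightarrow>
            int (qXp_calls cv [0..<m]) = \<lfloor>log 2 (real m)\<rfloor> + 1)
       \<and> (m \<ge> 2 \<longrightarrow> (\<forall>i<m. \<not> cv {i}) \<longrightarrow>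
            qXp_calls cv [0..<m] = (m - 1) * 2)
       \<and> (m = 1 \<longrightarrow> qXp_calls cv [0..<m] = 1)"
proof (intro conjI impI)
  assume "m \<ge> 2" "cv {0..<m}"
  then have "\<forall>S. S \<subseteq> {0..<m} \<longrightarrow> cv S" unfolding cv_def using cv_mono by blast
  from best[OF this, of "[0..<m]" "[]"] \<open>m \<ge> 2\<close>
  show "int (qXp_calls cv [0..<m]) = \<lfloor>log 2 (real m)\<rfloor> + 1"
    unfolding qXp_calls_def by (simp del: qXp.simps)
next
  assume "m \<ge> 2" "\<forall>i<m. \<not> cv {i}"
  then have "\<forall>S i. finite S \<longrightarrow> i \<in> S \<longrightarrow> i \<in> {0..<m} \<longrightarrow> \<not> cv S"
    unfolding cv_def using cv_mono[of f same p eps x _ "{_}"] by auto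
  from worst[OF this, of "[0..<m]"] \<open>m \<ge> 2\<close>
  show "qXp_calls cv [0..<m] = (m - 1) * 2" unfolding qXp_calls_def by (simp del: qXp.simps)
next
  assume "m = 1"
  have "cv {0} \<or> \<not> cv {0}" by blast
  then show "qXp_calls cv [0..<m] = 1" using \<open>m = 1\<close>
    unfolding qXp_calls_def by (subst qXp.simps) auto
qed

end
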